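(* Let $S=\{s_1,\dots,s_N\}$ and $A$ be finite, $r:S\times A\to\mathbb{R}$, and $0<\gamma_p<\gamma<1$. Suppose that for every state-action pair $(s_n,a_k)$ we observe transition counts $c_{n,k,1},\dots,c_{n,k,N}\ge 0$ with total $C_{n,k}=\sum_{i=1}^N c_{n,k,i}>0$, and let $\hat T_{\mathrm{MLE}}(s_n,a_k,s_i)=c_{n,k,i}/C_{n,k}$. Fix a probability vector $q=(q_1,\dots,q_N)$ with all $q_i>0$, and for each $(s_n,a_k)$ place the Dirichlet prior $\mathrm{Dirichlet}(\alpha_{n,k,1},\dots,\alpha_{n,k,N})$ on $T(s_n,a_k,\cdot)$ with $$\alpha_{n,k,i}=\frac{\gamma-\gamma_p}{\gamma_p}\,C_{n,k}\,q_i .$$ Let $\hat T_{\mathrm{post}}(s_n,a_k,s_i)=\dfrac{c_{n,k,i}+\alpha_{n,k,i}}{C_{n,k}+\sum_{j}\alpha_{n,k,j}}$ be the posterior mean. Then: (i) for every $(s_n,a_k)$, $\hat T_{\mathrm{post}}(s_n,a_k,\cdot)=(1-\epsilon)\hat T_{\mathrm{MLE}}(s_n,a_k,\cdot)+\epsilon\, q$ with $\epsilon=\frac{\gamma-\gamma_p}{\gamma}$, the same for all $(s_n,a_k)$; and (ii) the MDP $(S,A,r,\hat T_{\mathrm{post}})$ planned with discount $\gamma$ and the MDP $(S,A,r,\hat T_{\mathrm{MLE}})$ planned with discount $\gamma_p$ have the same optimal policies (same $\arg\max_a Q^*(s,a)$ sets in every state). In particular, for a uniform prior ($q_i=1/N$)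 the implied prior parameters are $\alpha_{n,k,i}=\frac{\gamma-\gamma_p}{\gamma_p}\cdot\frac{C_{n,k}}{N}$, which grow with the number of observed transitions $C_{n,k}$.
   Context: Planning with discount factor $\gamma$ in an MDP with transition kernel $P$ means computing the optimal action-value function $Q^*$ solving $Q^*(s,a)=r(s,a)+\gamma\sum_{s'}P(s,a,s')\max_{a'}Q^*(s',a')$; optimal policies are those choosing actions in $\arg\max_a Q^*(s,a)$. *)

theory Defs
  imports "HOL-Analysis.Analysis"
begin

definition bellman_fixpoint ::
  "('s::finite \<Rightarrow> 'a::finite \<Rightarrow> 's \<Rightarrow> real) \<Rightarrow> real \<Rightarrow> ('s \<Rightarrow> 'a \<Rightarrow> real) \<Rightarrow> ('s \<Rightarrow> 'a \<Rightarrow> real) \<Rightarrow> bool"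
  where "bellman_fixpoint P g r Q \<longleftrightarrow>
    (\<forall>s a. Q s a = r s a + g * (\<Sum>s'\<in>UNIV. P s a s' * Max (range (Q s'))))"

definition Qstar ::
  "('s::finite \<Rightarrow> 'a::finite \<Rightarrow> 's \<Rightarrow> real) \<Rightarrow> real \<Rightarrow> ('s \<Rightarrow> 'a \<Rightarrow> real) \<Rightarrow> ('s \<Rightarrow> 'a \<Rightarrow> real)"
  where "Qstar P g r = (THE Q. bellman_fixpoint P g r Q)"

definition opt_actions ::
  "('s::finite \<Rightarrow> 'a::finite \<Rightarrow> 's \<Rightarrow> real) \<Rightarrow> real \<Rightarrow> ('s \<Rightarrow> 'a \<Rightarrow> real) \<Rightarrow> 's \<Rightarrow> 'a set"
  where "opt_actions P g r s =
    {a. Qstar P g r s a = Max (range (Qstar P g r s))}"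

definition count_total :: "('s::finite \<Rightarrow> 'a \<Rightarrow> 's \<Rightarrow> nat) \<Rightarrow> 's \<Rightarrow> 'a \<Rightarrow> real"
  where "count_total c s a = real (\<Sum>i\<in>UNIV. c s a i)"

definition T_mle :: "('s::finite \<Rightarrow> 'a \<Rightarrow> 's \<Rightarrow> nat) \<Rightarrow> 's \<Rightarrow> 'a \<Rightarrow> 's \<Rightarrow> real"
  where "T_mle c s a i = real (c s a i) / count_total c s a"

definition prior_alpha ::
  "real \<Rightarrow> real \<Rightarrow> ('s::finite \<Rightarrow> real) \<Rightarrow> ('s \<Rightarrow> 'a \<Rightarrow> 's \<Rightarrow> nat) \<Rightarrow> 's \<Rightarrow> 'a \<Rightarrow> 's \<Rightarrow> real"
  where "prior_alpha g gp q c s a i = (g - gp) / gp * count_total c s a * q i"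

definition T_post ::
  "real \<Rightarrow> real \<Rightarrow> ('s::finite \<Rightarrow> real) \<Rightarrow> ('s \<Rightarrow> 'a \<Rightarrow> 's \<Rightarrow> nat) \<Rightarrow> 's \<Rightarrow> 'a \<Rightarrow> 's \<Rightarrow> real"
  where "T_post g gp q c s a i =
    (real (c s a i) + prior_alpha g gp q c s a i) /
    (count_total c s a + (\<Sum>j\<in>UNIV. prior_alpha g gp q c s a j))"

end

theory Submission
  imports Defs "HOL-Probability.Discrete_Topology"
begin

definition bop :: "('s::finite \<Rightarrow> 'a::finite \<Rightarrow> 's \<Rightarrow> real) \<Rightarrow> real \<Rightarrow> ('s \<Rightarrow> 'a \<Rightarrow> real) \<Rightarrow> ('s \<Rightarrow> 'a \<Rightarrow> real) \<Rightarrow> ('s \<Rightarrow> 'a \<Rightarrow> real)"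
  where "bop P g r Q = (\<lambda>s a. r s a + g * (\<Sum>s'\<in>UNIV. P s a s' * Max (range (Q s'))))"

lemma Max_range_le:
  fixes f h :: "'a::finite \<Rightarrow> real"
  assumes "\<And>a. f a \<le> h a + d"
  shows "Max (range f) \<le> Max (range h) + d"
proof -
  have "Max (range f) \<in> range f" by (intro Max_in) auto
  then obtain a where "Max (range f) = f a" by blast
  moreover have "h a \<le> Max (range h)" by (intro Max_ge) auto
  ultimately show ?thesis using assms[of a] by linarith
qed

lemma Max_range_diff:
  fixes f h :: "'a::finite \<Rightarrow> real"
  assumes "\<And>a. \<bar>f a - h a\<bar> \<le> d"
  shows "\<bar>Max (range f) - Max (range h)\<bar> \<le> d"
proof -
  have "Max (range f) \<le> Max (range h) + d"
  proof (rule Max_range_le)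
    fix a show "f a \<le> h a + d" using assms[of a] by (auto simp: abs_le_iff)
  qed
  moreover have "Max (range h) \<le> Max (range f) + d"
  proof (rule Max_range_le)
    fix a show "h a \<le> f a + d" using assms[of a] by (auto simp: abs_le_iff)
  qed
  ultimately show ?thesis by linarith
qed

lemma bop_contr:
  fixes P :: "'s::finite \<Rightarrow> 'a::finite \<Rightarrow> 's \<Rightarrow> real"
  assumes P0: "\<And>s a s'. P s a s' \<ge> 0" and P1: "\<And>s a. (\<Sum>s'\<in>UNIV. P s a s') = 1"
    and g: "0 \<le> g"
    and d: "\<And>s a. \<bar>Q1 s a - Q2 s a\<bar> \<le> d"
  shows "\<bar>bop P g r Q1 s a - bop P g r Q2 s a\<bar> \<le> g * d"
proof -
  have M: "\<bar>Max (range (Q1 s')) - Max (range (Q2 s'))\<bar> \<le> d" for s'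
    by (rule Max_range_diff) (rule d)
  have "\<bar>(\<Sum>s'\<in>UNIV. P s a s' * Max (range (Q1 s'))) - (\<Sum>s'\<in>UNIV. P s a s' * Max (range (Q2 s')))\<bar>
      = \<bar>\<Sum>s'\<in>UNIV. P s a s' * (Max (range (Q1 s')) - Max (range (Q2 s')))\<bar>"
    by (simp add: sum_subtractf right_diff_distrib)
  also have "\<dots> \<le> (\<Sum>s'\<in>UNIV. \<bar>P s a s' * (Max (range (Q1 s')) - Max (range (Q2 s')))\<bar>)"
    by (rule sum_abs)
  also have "\<dots> \<le> (\<Sum>s'\<in>UNIV. P s a s' * d)"
    by (intro sum_mono) (simp add: abs_mult P0 M mult_left_mono)
  also have "\<dots> = d" using P1 by (simp add: sum_distrib_right[symmetric])
  finally have "\<bar>(\<Sum>s'\<in>UNIV. P s a s' * Max (range (Q1 s'))) - (\<Sum>s'\<in>UNIV. P s a s' * Max (range (Q2 s')))\<bar> \<le> d" .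
  moreover have "bop P g r Q1 s a - bop P g r Q2 s a = g * ((\<Sum>s'\<in>UNIV. P s a s' * Max (range (Q1 s'))) - (\<Sum>s'\<in>UNIV. P s a s' * Max (range (Q2 s'))))"
    by (simp add: bop_def algebra_simps)
  ultimately show ?thesis using g
    by (simp add: abs_mult mult_left_mono)
qed

lemma bellman_bop: "bellman_fixpoint P g r Q \<longleftrightarrow> bop P g r Q = Q"
  unfolding bellman_fixpoint_def bop_def fun_eq_iff by metis

lemma bellman_unique:
  fixes P :: "'s::finite \<Rightarrow> 'a::finite \<Rightarrow> 's \<Rightarrow> real"
  assumes P0: "\<And>s a s'. P s a s' \<ge> 0" and P1: "\<And>s a. (\<Sum>s'\<in>UNIV. P s a s') = 1"
    and g: "0 \<le> g" "g < 1"
    and f1: "bellman_fixpoint P g r Q1" and f2: "bellman_fixpoint P g r Q2"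
  shows "Q1 = Q2"
proof -
  define D where "D = (\<lambda>(s,a). \<bar>Q1 s a - Q2 s a\<bar>)"
  define d where "d = Max (range D)"
  have dge: "\<bar>Q1 s a - Q2 s a\<bar> \<le> d" for s a
  proof -
    have "D (s,a) \<le> d" unfolding d_def by (rule Max_ge) simp_all
    then show ?thesis by (simp add: D_def)
  qed
  have "d \<in> range D" unfolding d_def by (rule Max_in) simp_all
  then obtain s0 a0 where d0: "d = \<bar>Q1 s0 a0 - Q2 s0 a0\<bar>" by (auto simp: D_def)
  have "\<bar>bop P g r Q1 s0 a0 - bop P g r Q2 s0 a0\<bar> \<le> g * d"
    by (rule bop_contr[OF P0 P1 g(1) dge])
  hence "d \<le> g * d" using f1 f2 d0 by (simp add: bellman_bop)
  hence "(1 - g) * d \<le> 0" by (simp add: algebra_simps)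
  moreover have "0 \<le> d" using d0 by simp
  moreover have "0 < 1 - g" using g by simp
  ultimately have "d = 0" by (simp add: mult_le_0_iff)
  then show ?thesis using dge by (auto simp: fun_eq_iff)
qed

definition toB :: "('s \<Rightarrow> 'a \<Rightarrow> real) \<Rightarrow> (('s \<times> 'a) discrete \<Rightarrow>\<^sub>C real)"
  where "toB Q = Bcontfun (\<lambda>x. case of_discrete x of (s,a) \<Rightarrow> Q s a)"

definition fromB :: "(('s \<times> 'a) discrete \<Rightarrow>\<^sub>C real) \<Rightarrow> ('s \<Rightarrow> 'a \<Rightarrow> real)"
  where "fromB f = (\<lambda>s a. apply_bcontfun f (discrete (s,a)))"

lemma fromB_toB:
  fixes Q :: "'s::finite \<Rightarrow> 'a::finite \<Rightarrow> real"
  shows "fromB (toB Q) = Q"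
proof -
  let ?f = "\<lambda>x. case of_discrete x of (s,a) \<Rightarrow> Q s a"
  have cont: "continuous_on UNIV ?f"
    by (simp add: continuous_on_open_invariant open_discrete)
  define b where "b = Max (range (\<lambda>(s,a). norm (Q s a)))"
  have "norm (?f x) \<le> b" for x
    unfolding b_def by (rule Max_ge) (auto split: prod.splits intro!: image_eqI)
  hence "?f \<in> bcontfun" using cont by (intro bcontfun_normI) auto
  then show ?thesis
    by (auto simp: fromB_def toB_def Bcontfun_inverse discrete_inverse fun_eq_iff)
qed

lemma bellman_exists:
  fixes P :: "'s::finite \<Rightarrow> 'a::finite \<Rightarrow> 's \<Rightarrow> real"
  assumes P0: "\<And>s a s'. P s a s' \<ge> 0" and P1: "\<And>s a. (\<Sum>s'\<in>UNIV. P s a s') = 1"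
    and g: "0 \<le> g" "g < 1"
  shows "\<exists>Q. bellman_fixpoint P g r Q"
proof -
  define F where "F f = toB (bop P g r (fromB f))" for f :: "('s \<times> 'a) discrete \<Rightarrow>\<^sub>C real"
  have dB: "\<bar>fromB f s a - fromB h s a\<bar> \<le> dist f h" for f h s a
    using dist_bounded[of f "discrete (s,a)" h] by (simp add: fromB_def dist_real_def)
  have "dist (F f) (F h) \<le> g * dist f h" for f h
  proof (rule dist_bound)
    fix x :: "('s \<times> 'a) discrete"
    obtain s a where x: "x = discrete (s,a)"
      by (metis discrete_cases surj_pair)
    have "apply_bcontfun (F f) x = bop P g r (fromB f) s a" for f
      using fromB_toB[of "bop P g r (fromB f)"] by (simp add: F_def fromB_def x fun_eq_iff)
    then show "dist (F f x) (F h x) \<le> g * dist f h"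
      using bop_contr[OF P0 P1 g(1) dB] by (simp add: dist_real_def)
  qed
  then obtain f where "F f = f" using banach_fix_type[OF g] by blast
  hence "fromB (F f) = fromB f" by simp
  hence "bop P g r (fromB f) = fromB f" by (simp add: F_def fromB_toB)
  then show ?thesis by (auto simp: bellman_bop)
qed

lemma Qstar_eq:
  fixes P :: "'s::finite \<Rightarrow> 'a::finite \<Rightarrow> 's \<Rightarrow> real"
  assumes P0: "\<And>s a s'. P s a s' \<ge> 0" and P1: "\<And>s a. (\<Sum>s'\<in>UNIV. P s a s') = 1"
    and g: "0 \<le> g" "g < 1" and f: "bellman_fixpoint P g r Q"
  shows "Qstar P g r = Q"
  unfolding Qstar_def
proof (rule the_equality)
  show "bellman_fixpoint P g r Q" by (rule f)
next
  fix Q' assume "bellman_fixpoint P g r Q'"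
  then show "Q' = Q" using bellman_unique[OF P0 P1 g _ f] by blast
qed

theorem mainTheorem2:
  fixes r :: "'s::finite \<Rightarrow> 'a::finite \<Rightarrow> real"
    and c :: "'s \<Rightarrow> 'a \<Rightarrow> 's \<Rightarrow> nat"
    and q :: "'s \<Rightarrow> real"
    and g gp :: real
  assumes "0 < gp" and "gp < g" and "g < 1"
    and "\<And>s a. count_total c s a > 0"
    and "\<And>i. q i > 0" and "(\<Sum>i\<in>UNIV. q i) = 1"
  shows "(\<forall>s a i. T_post g gp q c s a i =
             (1 - (g - gp) / g) * T_mle c s a i + ((g - gp) / g) * q i)
       \<and> (\<forall>s. opt_actions (T_post g gp q c) g r s = opt_actions (T_mle c) gp r s)
       \<and> (q = (\<lambda>_. 1 / real CARD('s)) \<longrightarrow>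
            (\<forall>s a i. prior_alpha g gp q c s a i
                 = (g - gp) / gp * (count_total c s a / real CARD('s))))"
proof -
  have gp1: "gp < 1" using assms by linarith
  have C: "count_total c s a > 0" for s a using assms(4) .
  have i: "T_post g gp q c s a i = (1 - (g - gp) / g) * T_mle c s a i + ((g - gp) / g) * q i" for s a i
  proof -
    let ?C = "count_total c s a"
    have sa: "(\<Sum>j\<in>UNIV. prior_alpha g gp q c s a j) = (g - gp) / gp * ?C"
      unfolding prior_alpha_def using assms(6) by (simp add: sum_distrib_left[symmetric] del: times_divide_eq_left)
    have "?C \<noteq> 0" using C[of s a] by simp
    then show ?thesis using assms(1,2)
      unfolding T_post_def sa T_mle_def prior_alpha_def
      by (simp add: field_simps)
  qed
  have Tm0: "T_mle c s a s' \<ge> 0" for s a s' unfolding T_mle_def using C[of s a] by simp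
  have Tm1: "(\<Sum>s'\<in>UNIV. T_mle c s a s') = 1" for s a
    unfolding T_mle_def using C[of s a]
    by (simp add: sum_divide_distrib[symmetric] count_total_def)
  have Tp0: "T_post g gp q c s a s' \<ge> 0" for s a s'
    unfolding i using Tm0[of s a s'] assms(1,2) assms(5)[of s'] by (intro add_nonneg_nonneg mult_nonneg_nonneg) (auto simp: field_simps)
  have Tp1: "(\<Sum>s'\<in>UNIV. T_post g gp q c s a s') = 1" for s a
    unfolding i using Tm1[of s a] assms(6)
    by (simp add: sum.distrib sum_distrib_left[symmetric] del: times_divide_eq_left times_divide_eq_right)
  obtain Qm where Qm: "bellman_fixpoint (T_mle c) gp r Qm"
    using bellman_exists[of "T_mle c" gp r] Tm0 Tm1 assms(1) gp1 by auto
  have QmE: "Qstar (T_mle c) gp r = Qm" by (rule Qstar_eq[OF Tm0 Tm1 _ gp1 Qm]) (use assms in auto)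
  define S where "S = (\<Sum>s'\<in>UNIV. q s' * Max (range (Qm s')))"
  define K where "K = (g - gp) * S / (1 - g)"
  have Kr: "K = g * K + (g - gp) * S" using assms(3) unfolding K_def by (simp add: field_simps)
  have MK: "Max (range (\<lambda>a. Qm s a + K)) = Max (range (Qm s)) + K" for s
    using Max_add_commute[of "UNIV::'a set" "Qm s" K] by simp
  have eqm: "Qm s a = r s a + gp * (\<Sum>s'\<in>UNIV. T_mle c s a s' * Max (range (Qm s')))" for s a
    using Qm unfolding bellman_fixpoint_def by blast
  have "bellman_fixpoint (T_post g gp q c) g r (\<lambda>s a. Qm s a + K)"
    unfolding bellman_fixpoint_def
  proof (intro allI)
    fix s a
    let ?M = "\<lambda>s'. Max (range (Qm s'))"
    have "g * (\<Sum>s'\<in>UNIV. T_post g gp q c s a s' * (?M s' + K))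
        = g * (\<Sum>s'\<in>UNIV. ((gp / g) * (T_mle c s a s' * ?M s') + (gp/g) * K * T_mle c s a s'
             + ((g - gp) / g) * (q s' * ?M s') + ((g - gp) / g) * K * q s'))"
      unfolding i using assms(1,2) by (intro arg_cong[where f="(*) g"] sum.cong) (auto simp: field_simps)
    also have "\<dots> = g * ((gp / g) * (\<Sum>s'\<in>UNIV. T_mle c s a s' * ?M s') + (gp/g) * K * (\<Sum>s'\<in>UNIV. T_mle c s a s')
             + ((g - gp) / g) * S + ((g - gp) / g) * K * (\<Sum>s'\<in>UNIV. q s'))"
      by (simp add: sum.distrib sum_distrib_left S_def)
    also have "\<dots> = gp * (\<Sum>s'\<in>UNIV. T_mle c s a s' * ?M s') + gp * K + (g - gp) * S + (g - gp) * K"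
      using Tm1[of s a] assms(1,2,6) by (simp add: field_simps)
    finally have "g * (\<Sum>s'\<in>UNIV. T_post g gp q c s a s' * (?M s' + K))
        = gp * (\<Sum>s'\<in>UNIV. T_mle c s a s' * ?M s') + K" using Kr by (simp add: algebra_simps)
    then show "Qm s a + K = r s a + g * (\<Sum>s'\<in>UNIV. T_post g gp q c s a s' * Max (range (\<lambda>a. Qm s' a + K)))"
      using eqm[of s a] by (simp add: MK)
  qed
  hence QpE: "Qstar (T_post g gp q c) g r = (\<lambda>s a. Qm s a + K)"
    using Qstar_eq[of "T_post g gp q c" g r "\<lambda>s a. Qm s a + K"] Tp0 Tp1 assms(2,3) assms(1) by auto
  have ii: "opt_actions (T_post g gp q c) g r s = opt_actions (T_mle c) gp r s" for s
    unfolding opt_actions_def QpE QmE MK by simp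
  show ?thesis using i ii by (auto simp: prior_alpha_def)
qed

end
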